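(* Let $X$ be an unbounded metric space of bounded geometry with finite asymptotic dimension, and let $1\le p<\infty$. Then for every $S>0$ with $\delta_p(S)>0$, $$\epsilon_{X;p}(S)\le\frac{2^{1+1/p}}{\delta_p(S)}\le\frac{4}{\delta_p(S)}.$$
   Context: A metric space has bounded geometry if for every $R$ there is $C$ such that every $R$-ball has at most $C$ points. For a cover $\mathfrak U$ of $X$: $L(\mathfrak U,x)=\sup_{U\in\mathfrak U}\sup\{r: B_r(x)\subset U\}$, $L(\mathfrak U)=\inf_x L(\mathfrak U,x)$, $m(\mathfrak U)=\max_x\#\{U\in\mathfrak U:x\in U\}$, $S(\mathfrak U)=\sup_{U\in\mathfrak U}\operatorname{diam}U$. $X$ has finite asymptotic dimension if for some $k$ and every $L>0$ there is a cover with finite mesh, multiplicity $\le k+1$ and Lebesgue number $\ge L$. Define $\delta_p(S)=\sup\{L(\mathfrak U)/m(\mathfrak U)^{2/p}\}$ over covers $\mathfrak U$ of $X$ with $S(\mathfrak U)\le S$ (terms with infinite multiplicity count as $0$). $\ell^p(X)$, $\ell^p_1(X)$ denote the $p$-summable functions and their unit sphere; for $\xi\colon X\to\ell^p(X)$, $S(\xi)=\sup\{d(x,y):\xi_x(y)\ne0\}$, $\varepsilon(\xi;p)=\sup_{x\ne y}\|\xi_x-\xi_y\|_p/d(x,y)$, and $\epsilon_{X;p}(S)=\inf\{\varepsilon(\xi;p):\xi\colon X\to\ell^p_1(X),\ S(\xi)\le S\}$. *)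

theory Defs
  imports "HOL-Analysis.Analysis"
begin

text \<open>The metric space X is the whole type 'a. Suprema are taken in the extended reals.\<close>

definition bounded_geometry :: "'a::metric_space itself \<Rightarrow> bool" where
  "bounded_geometry _ \<longleftrightarrow>
     (\<forall>R::real. \<exists>C::nat. \<forall>x::'a. finite (cball x R) \<and> card (cball x R) \<le> C)"

definition leb_at :: "'a::metric_space set set \<Rightarrow> 'a \<Rightarrow> ereal" where
  "leb_at \<U> x = (SUP U\<in>\<U>. Sup {ereal r | r. ball x r \<subseteq> U})"

definition leb :: "'a::metric_space set set \<Rightarrow> ereal" where
  "leb \<U> = (INF x. leb_at \<U> x)"

definition mult :: "'a set set \<Rightarrow> ereal" where
  "mult \<U> = (SUP x. (if finite {U\<in>\<U>. x \<in> U} then ereal (real (card {U\<in>\<U>. x \<in> U})) else \<infinity>))"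

definition ediam :: "'a::metric_space set \<Rightarrow> ereal" where
  "ediam U = (SUP (x,y)\<in>U \<times> U. ereal (dist x y))"

definition mesh :: "'a::metric_space set set \<Rightarrow> ereal" where
  "mesh \<U> = (SUP U\<in>\<U>. ediam U)"

definition is_cover :: "'a set set \<Rightarrow> bool" where
  "is_cover \<U> \<longleftrightarrow> \<Union>\<U> = UNIV"

definition finite_asdim :: "'a::metric_space itself \<Rightarrow> bool" where
  "finite_asdim _ \<longleftrightarrow> (\<exists>k::nat. \<forall>L::real. L > 0 \<longrightarrow>
     (\<exists>\<U>::'a set set. is_cover \<U> \<and> mesh \<U> < \<infinity> \<and> mult \<U> \<le> ereal (real k + 1)
        \<and> leb \<U> \<ge> ereal L))"

text \<open>Term L(U)/m(U)^(2/p); covers of infinite multiplicity contribute 0.\<close>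
definition cover_ratio :: "real \<Rightarrow> 'a::metric_space set set \<Rightarrow> ereal" where
  "cover_ratio p \<U> =
     (if mult \<U> = \<infinity> then 0 else leb \<U> / ereal (real_of_ereal (mult \<U>) powr (2 / p)))"

definition delta_p :: "'a::metric_space itself \<Rightarrow> real \<Rightarrow> real \<Rightarrow> ereal" where
  "delta_p _ p S = (SUP \<U>\<in>{\<U>::'a set set. is_cover \<U> \<and> mesh \<U> \<le> ereal S}. cover_ratio p \<U>)"

definition in_lp :: "real \<Rightarrow> ('a \<Rightarrow> real) \<Rightarrow> bool" where
  "in_lp p f \<longleftrightarrow> (\<lambda>y. \<bar>f y\<bar> powr p) summable_on UNIV"

definition lp_norm :: "real \<Rightarrow> ('a \<Rightarrow> real) \<Rightarrow> real" where
  "lp_norm p f = (\<Sum>\<^sub>\<infinity>y. \<bar>f y\<bar> powr p) powr (1 / p)"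

definition lp_sphere :: "real \<Rightarrow> ('a \<Rightarrow> real) set" where
  "lp_sphere p = {f. in_lp p f \<and> lp_norm p f = 1}"

definition prop_S :: "('a::metric_space \<Rightarrow> 'a \<Rightarrow> real) \<Rightarrow> ereal" where
  "prop_S \<xi> = Sup {ereal (dist x y) | x y. \<xi> x y \<noteq> 0}"

definition eps_xi :: "real \<Rightarrow> ('a::metric_space \<Rightarrow> 'a \<Rightarrow> real) \<Rightarrow> ereal" where
  "eps_xi p \<xi> = (SUP (x,y)\<in>{(x,y). x \<noteq> y}. ereal (lp_norm p (\<lambda>z. \<xi> x z - \<xi> y z) / dist x y))"

definition eps_X :: "'a::metric_space itself \<Rightarrow> real \<Rightarrow> real \<Rightarrow> ereal" where
  "eps_X _ p S = (INF \<xi>\<in>{\<xi>::'a \<Rightarrow> 'a \<Rightarrow> real. (\<forall>x. \<xi> x \<in> lp_sphere p) \<and> prop_S \<xi> \<le> ereal S}. eps_xi p \<xi>)"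

end

theory Submission
  imports Defs
begin

definition pn :: "real \<Rightarrow> 'b set \<Rightarrow> ('b \<Rightarrow> real) \<Rightarrow> real" where
  "pn p I f = (\<Sum>i\<in>I. \<bar>f i\<bar> powr p) powr (1/p)"

lemma pn_nonneg: "pn p I f \<ge> 0"
  by (simp add: pn_def)

lemma pn_pow: assumes "p > 0" shows "pn p I f powr p = (\<Sum>i\<in>I. \<bar>f i\<bar> powr p)"
proof -
  have "(\<Sum>i\<in>I. \<bar>f i\<bar> powr p) \<ge> 0" by (intro sum_nonneg) auto
  then show ?thesis using assms by (simp add: pn_def powr_powr)
qed

lemma pn_zero_iff: assumes "finite I" "p > 0" shows "pn p I f = 0 \<longleftrightarrow> (\<forall>i\<in>I. f i = 0)"
proof -
  have "pn p I f = 0 \<longleftrightarrow> (\<Sum>i\<in>I. \<bar>f i\<bar> powr p) = 0" using assms by (simp add: pn_def)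
  also have "\<dots> \<longleftrightarrow> (\<forall>i\<in>I. \<bar>f i\<bar> powr p = 0)" using assms by (intro sum_nonneg_eq_0_iff) auto
  finally show ?thesis by simp
qed

lemma pn_scale: assumes "p > 0" shows "pn p I (\<lambda>i. c * f i) = \<bar>c\<bar> * pn p I f"
proof -
  have "(\<Sum>i\<in>I. \<bar>c * f i\<bar> powr p) = \<bar>c\<bar> powr p * (\<Sum>i\<in>I. \<bar>f i\<bar> powr p)"
    by (simp add: abs_mult powr_mult sum_distrib_left)
  moreover have "(\<bar>c\<bar> powr p) powr (1/p) = \<bar>c\<bar>" using assms by (simp add: powr_powr)
  ultimately show ?thesis using assms by (simp add: pn_def powr_mult)
qed

lemma pn_single: assumes "finite I" "i \<in> I" "p > 0" shows "\<bar>f i\<bar> \<le> pn p I f"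
proof -
  have "\<bar>f i\<bar> powr p \<le> (\<Sum>i\<in>I. \<bar>f i\<bar> powr p)"
    using assms by (intro member_le_sum) auto
  then have "(\<bar>f i\<bar> powr p) powr (1/p) \<le> pn p I f" unfolding pn_def
    by (intro powr_mono2) (use assms in auto)
  then show ?thesis using assms by (simp add: powr_powr)
qed

lemma convex_pt:
  fixes t u v p :: real
  assumes "0 \<le> t" "t \<le> 1" "0 \<le> u" "0 \<le> v" "p \<ge> 1"
  shows "(t * u + (1-t) * v) powr p \<le> t * u powr p + (1-t) * v powr p"
proof -
  have key: "(s * w) powr p \<le> s * w powr p" if "0 \<le> s" "s \<le> 1" "0 \<le> w" for s w :: real
  proof -
    have "s powr p \<le> s"
    proof (cases "s = 0")
      case False
      then have "s powr p \<le> s powr 1" using that assms by (intro powr_mono') auto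
      then show ?thesis using False that by simp
    qed simp
    then show ?thesis using that by (simp add: powr_mult mult_right_mono)
  qed
  show ?thesis
  proof (cases "u = 0 \<or> v = 0")
    case True
    then show ?thesis
    proof
      assume "u = 0" then show ?thesis using key[of "1-t" v] assms by simp
    next
      assume "v = 0" then show ?thesis using key[of t u] assms by simp
    qed
  next
    case False
    then have "u > 0" "v > 0" using assms by auto
    from convex_onD[OF powr_convex[OF assms(5)], of "1-t" u v] this assms
    show ?thesis by (simp add: algebra_simps)
  qed
qed

lemma minkowski:
  assumes "finite I" "p \<ge> 1"
  shows "pn p I (\<lambda>i. f i + g i) \<le> pn p I f + pn p I g"
proof -
  define A where "A = pn p I f"
  define B where "B = pn p I g"
  have p0: "p > 0" using assms by simp
  show ?thesis
  proof (cases "A = 0 \<or> B = 0")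
    case True
    then show ?thesis
    proof
      assume "A = 0"
      then have "\<forall>i\<in>I. f i = 0" using pn_zero_iff[OF assms(1) p0] A_def by simp
      then have "pn p I (\<lambda>i. f i + g i) = pn p I g" unfolding pn_def by (intro arg_cong[where f="\<lambda>x. x powr _"] sum.cong) auto
      then show ?thesis using \<open>A = 0\<close> A_def by simp
    next
      assume "B = 0"
      then have "\<forall>i\<in>I. g i = 0" using pn_zero_iff[OF assms(1) p0] B_def by simp
      then have "pn p I (\<lambda>i. f i + g i) = pn p I f" unfolding pn_def by (intro arg_cong[where f="\<lambda>x. x powr _"] sum.cong) auto
      then show ?thesis using \<open>B = 0\<close> B_def by simp
    qed
  next
    case False
    then have Ap: "A > 0" and Bp: "B > 0" using pn_nonneg A_def B_def by (metis less_eq_real_def)+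
    define t where "t = A / (A + B)"
    have t0: "0 \<le> t" "t \<le> 1" using Ap Bp by (auto simp: t_def)
    have pt: "\<bar>f i + g i\<bar> powr p \<le> (A+B) powr p * (t * (\<bar>f i\<bar>/A) powr p + (1-t) * (\<bar>g i\<bar>/B) powr p)" for i
    proof -
      have t1: "1 - t = B / (A+B)" using Ap Bp by (simp add: t_def field_simps)
      have e: "\<bar>f i\<bar> + \<bar>g i\<bar> = (A+B) * (t * (\<bar>f i\<bar>/A) + (1-t) * (\<bar>g i\<bar>/B))"
      proof -
        have a: "t * (\<bar>f i\<bar>/A) = \<bar>f i\<bar>/(A+B)" using Ap Bp by (simp add: t_def)
        have b: "(1-t) * (\<bar>g i\<bar>/B) = \<bar>g i\<bar>/(A+B)" using Ap Bp unfolding t1 by simp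
        have c: "(A+B) * (\<bar>f i\<bar>/(A+B) + \<bar>g i\<bar>/(A+B)) = \<bar>f i\<bar> + \<bar>g i\<bar>"
          using Ap Bp by (simp add: add_divide_distrib[symmetric])
        show ?thesis unfolding a b c ..
      qed
      have "\<bar>f i + g i\<bar> powr p \<le> (\<bar>f i\<bar> + \<bar>g i\<bar>) powr p"
        using p0 by (intro powr_mono2) auto
      also have "\<dots> = (A+B) powr p * (t * (\<bar>f i\<bar>/A) + (1-t) * (\<bar>g i\<bar>/B)) powr p"
        unfolding e using Ap Bp t0 by (subst powr_mult) auto
      also have "\<dots> \<le> (A+B) powr p * (t * (\<bar>f i\<bar>/A) powr p + (1-t) * (\<bar>g i\<bar>/B) powr p)"
        using Ap Bp t0 assms by (intro mult_left_mono convex_pt) auto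
      finally show ?thesis .
    qed
    have sf: "(\<Sum>i\<in>I. (\<bar>f i\<bar>/A) powr p) = 1"
    proof -
      have "(\<Sum>i\<in>I. (\<bar>f i\<bar>/A) powr p) = (\<Sum>i\<in>I. \<bar>f i\<bar> powr p) / A powr p"
        using Ap by (simp add: powr_divide sum_divide_distrib)
      also have "\<dots> = 1"
      proof -
        have "(\<Sum>i\<in>I. \<bar>f i\<bar> powr p) = A powr p" using pn_pow[OF p0, of I f] by (simp add: A_def)
        then show ?thesis using Ap by simp
      qed
      finally show ?thesis .
    qed
    have sg: "(\<Sum>i\<in>I. (\<bar>g i\<bar>/B) powr p) = 1"
    proof -
      have "(\<Sum>i\<in>I. (\<bar>g i\<bar>/B) powr p) = (\<Sum>i\<in>I. \<bar>g i\<bar> powr p) / B powr p"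
        using Bp by (simp add: powr_divide sum_divide_distrib)
      also have "\<dots> = 1"
      proof -
        have "(\<Sum>i\<in>I. \<bar>g i\<bar> powr p) = B powr p" using pn_pow[OF p0, of I g] by (simp add: B_def)
        then show ?thesis using Bp by simp
      qed
      finally show ?thesis .
    qed
    have "(\<Sum>i\<in>I. \<bar>f i + g i\<bar> powr p) \<le> (\<Sum>i\<in>I. (A+B) powr p * (t * (\<bar>f i\<bar>/A) powr p + (1-t) * (\<bar>g i\<bar>/B) powr p))"
      by (intro sum_mono pt)
    also have "\<dots> = (A+B) powr p * (t * (\<Sum>i\<in>I. (\<bar>f i\<bar>/A) powr p) + (1-t) * (\<Sum>i\<in>I. (\<bar>g i\<bar>/B) powr p))"
      by (simp add: sum_distrib_left[symmetric] sum.distrib)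
    also have "\<dots> = (A+B) powr p" using sf sg by simp
    finally have "(\<Sum>i\<in>I. \<bar>f i + g i\<bar> powr p) \<le> (A+B) powr p" .
    then have "pn p I (\<lambda>i. f i + g i) \<le> ((A+B) powr p) powr (1/p)"
      unfolding pn_def by (intro powr_mono2) (use p0 in \<open>auto intro: sum_nonneg\<close>)
    also have "\<dots> = A + B" using Ap Bp p0 by (simp add: powr_powr)
    finally show ?thesis by (simp add: A_def B_def)
  qed
qed

lemma pn_cong: "(\<And>i. i \<in> I \<Longrightarrow> f i = g i) \<Longrightarrow> pn p I f = pn p I g"
  unfolding pn_def by (metis (no_types, lifting) sum.cong)

lemma pn_diff_tri:
  assumes "finite I" "p \<ge> 1"
  shows "pn p I (\<lambda>i. f i - h i) \<le> pn p I (\<lambda>i. f i - g i) + pn p I (\<lambda>i. g i - h i)"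
  using minkowski[OF assms, of "\<lambda>i. f i - g i" "\<lambda>i. g i - h i"] by simp

lemma pn_rev:
  assumes "finite I" "p \<ge> 1"
  shows "\<bar>pn p I f - pn p I g\<bar> \<le> pn p I (\<lambda>i. f i - g i)"
proof -
  have p0: "p > 0" using assms by simp
  have 1: "pn p I f \<le> pn p I (\<lambda>i. f i - g i) + pn p I g"
    using minkowski[OF assms, of "\<lambda>i. f i - g i" g] by simp
  have "pn p I (\<lambda>i. g i - f i) = pn p I (\<lambda>i. f i - g i)"
    using pn_scale[OF p0, of I "-1" "\<lambda>i. f i - g i"] by simp
  moreover have "pn p I g \<le> pn p I (\<lambda>i. g i - f i) + pn p I f"
    using minkowski[OF assms, of "\<lambda>i. g i - f i" f] by simp
  ultimately show ?thesis using 1 by linarith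
qed


lemma lp_fin:
  assumes "finite Z" "\<And>z. z \<notin> Z \<Longrightarrow> f z = 0" "p > 0"
  shows "in_lp p f" "lp_norm p f = pn p Z f"
proof -
  have "(\<lambda>y. \<bar>f y\<bar> powr p) summable_on UNIV \<longleftrightarrow> (\<lambda>y. \<bar>f y\<bar> powr p) summable_on Z"
    using assms by (intro summable_on_cong_neutral) auto
  then show "in_lp p f" using assms unfolding in_lp_def by simp
  have "infsum (\<lambda>y. \<bar>f y\<bar> powr p) UNIV = infsum (\<lambda>y. \<bar>f y\<bar> powr p) Z"
    using assms by (intro infsum_cong_neutral) auto
  then show "lp_norm p f = pn p Z f" using assms unfolding lp_norm_def pn_def by simp
qed

lemma exch:
  assumes "finite Z" "finite W" "W \<subseteq> UU" "\<And>U. U \<in> W \<Longrightarrow> U \<noteq> {} \<and> U \<subseteq> Z"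
    "\<And>U. U \<in> UU \<Longrightarrow> U \<notin> W \<Longrightarrow> h U = 0" "\<And>z. z \<in> Z \<Longrightarrow> finite {U\<in>UU. z \<in> U}"
  shows "(\<Sum>z\<in>Z. \<Sum>U\<in>{U\<in>UU. z \<in> U}. h U / real (card U)) = (\<Sum>U\<in>W. h U)"
proof -
  have "(\<Sum>z\<in>Z. \<Sum>U\<in>{U\<in>UU. z \<in> U}. h U / real (card U)) = (\<Sum>z\<in>Z. \<Sum>U\<in>{U. U\<in>W \<and> z \<in> U}. h U / real (card U))"
  proof (rule sum.cong[OF refl])
    fix z assume "z \<in> Z"
    show "(\<Sum>U\<in>{U\<in>UU. z \<in> U}. h U / real (card U)) = (\<Sum>U\<in>{U. U\<in>W \<and> z \<in> U}. h U / real (card U))"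
      using assms \<open>z \<in> Z\<close> by (intro sum.mono_neutral_right) auto
  qed
  also have "\<dots> = (\<Sum>U\<in>W. \<Sum>z\<in>{z. z\<in>Z \<and> z \<in> U}. h U / real (card U))"
    using sum.swap_restrict[of Z W "\<lambda>z U. h U / real (card U)" "\<lambda>z U. z \<in> U"] assms(1,2) by simp
  also have "\<dots> = (\<Sum>U\<in>W. h U)"
  proof (rule sum.cong[OF refl])
    fix U assume U: "U \<in> W"
    then have "{z. z\<in>Z \<and> z \<in> U} = U" using assms by auto
    moreover have "card U > 0" using U assms by (meson card_gt_0_iff finite_subset)
    ultimately show "(\<Sum>z\<in>{z. z\<in>Z \<and> z \<in> U}. h U / real (card U)) = h U" by simp
  qed
  finally show ?thesis .
qed


lemma powr_inj_nonneg:
  fixes x y p :: real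
  assumes "x \<ge> 0" "y \<ge> 0" "p > 0" "x powr p = y powr p"
  shows "x = y"
proof -
  have "x = (x powr p) powr (1/p)" using assms(1,3) by (simp add: powr_powr)
  moreover have "y = (y powr p) powr (1/p)" using assms(2,3) by (simp add: powr_powr)
  ultimately show ?thesis using assms(4) by simp
qed

lemma pow_div_card:
  fixes t p :: real and c :: nat
  assumes "c > 0" "p > 0"
  shows "(\<bar>t\<bar> / real c powr (1/p)) powr p = \<bar>t\<bar> powr p / real c"
  using assms by (simp add: powr_divide powr_powr)

lemma main:
  fixes UU :: "'a::metric_space set set" and p S :: real
  assumes unb: "\<not> bounded (UNIV :: 'a set)"
   and fin: "\<And>x::'a. finite (cball x S)"
   and cov: "is_cover UU" and mesh: "mesh UU \<le> ereal S"
   and mf: "mult UU \<noteq> \<infinity>" and p1: "1 \<le> p" and lp: "leb UU > 0"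
  shows "\<exists>Lr m. leb UU = ereal Lr \<and> Lr > 0 \<and> mult UU = ereal m \<and> m \<ge> 1 \<and>
           eps_X TYPE('a) p S \<le> ereal (2 * (2*m) powr (1/p) / Lr)"
proof -
  have p0: "p > 0" using p1 by simp
  define Ux where "Ux x = {U\<in>UU. x\<in>U}" for x
  have dS: "dist x y \<le> S" if "U\<in>UU" "x\<in>U" "y\<in>U" for U x y
  proof -
    have "ereal (dist x y) \<le> ediam U"
      unfolding ediam_def using that by (intro SUP_upper2[of "(x,y)"]) auto
    also have "\<dots> \<le> mesh UU" unfolding mesh_def using that by (intro SUP_upper) auto
    finally have "ereal (dist x y) \<le> ereal S" using mesh by (rule order_trans)
    then show ?thesis by simp
  qed
  have sub: "U \<subseteq> cball x S" if "U\<in>UU" "x\<in>U" for U x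
    using dS that by auto
  have finU: "finite U" "card U > 0" if "U\<in>UU" "x\<in>U" for U x
    using sub[OF that] fin that finite_subset by (auto simp: card_gt_0_iff)
  define g where "g x = (if finite {U\<in>UU. x \<in> U} then ereal (real (card {U\<in>UU. x \<in> U})) else \<infinity>)" for x
  have gle: "g x \<le> mult UU" for x unfolding mult_def g_def by (intro SUP_upper) auto
  have Uxfin: "finite (Ux x)" for x
    using gle[of x] mf unfolding g_def Ux_def by (auto split: if_splits)
  have cardle: "ereal (real (card (Ux x))) \<le> mult UU" for x
    using gle[of x] Uxfin[of x] unfolding g_def Ux_def by auto
  have Uxne: "Ux x \<noteq> {}" for x
    using cov unfolding is_cover_def Ux_def by auto
  then have card1: "card (Ux x) \<ge> 1" for x using Uxfin
    by (metis One_nat_def Suc_leI card_gt_0_iff)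
  define m where "m = real_of_ereal (mult UU)"
  have mult_eq: "mult UU = ereal m"
  proof -
    have "ereal 1 \<le> ereal (real (card (Ux undefined)))" using card1[of undefined] by simp
    then have "ereal 1 \<le> mult UU" using cardle[of undefined] by (rule order_trans)
    then show ?thesis using mf unfolding m_def by (cases "mult UU") auto
  qed
  have cardm: "real (card (Ux x)) \<le> m" for x using cardle[of x] mult_eq by simp
  have m1: "m \<ge> 1" using cardm[of undefined] card1[of undefined] by linarith

  define a where "a U x = infdist x (-U)" for U :: "'a set" and x
  have a_nn: "a U x \<ge> 0" for U x unfolding a_def by (rule infdist_nonneg)
  have a_lip: "\<bar>a U x - a U y\<bar> \<le> dist x y" for U x y unfolding a_def by (rule infdist_triangle_abs)
  have a_zero: "a U x = 0" if "x \<notin> U" for U x unfolding a_def using that by simp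
  define b where "b U x = a U x / real (card U) powr (1/p)" for U x
  define F where "F x z = pn p (Ux z) (\<lambda>U. b U x)" for x z
  have F_nn: "F x z \<ge> 0" for x z unfolding F_def by (rule pn_nonneg)
  have F_supp: "z \<in> cball x S" if "F x z \<noteq> 0" for x z
  proof -
    from that obtain U where U: "U \<in> Ux z" "b U x \<noteq> 0"
      unfolding F_def using pn_zero_iff[OF Uxfin p0] by blast
    then have "x \<in> U" using a_zero unfolding b_def by fastforce
    then show ?thesis using dS[of U x z] U unfolding Ux_def by auto
  qed
  have bpow: "\<bar>b U x - b U y\<bar> powr p = \<bar>a U x - a U y\<bar> powr p / real (card U)" if "U \<in> Ux z" for U x y z
  proof -
    have c: "card U > 0" using finU that unfolding Ux_def by auto
    have "b U x - b U y = (a U x - a U y) / real (card U) powr (1/p)" unfolding b_def by (simp add: diff_divide_distrib)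
    then have "\<bar>b U x - b U y\<bar> = \<bar>a U x - a U y\<bar> / real (card U) powr (1/p)" by simp
    then show ?thesis using pow_div_card[OF c p0] by simp
  qed
  have Fpow: "\<bar>F x z\<bar> powr p = (\<Sum>U\<in>Ux z. a U x powr p / real (card U))" for x z
  proof -
    have "\<bar>F x z\<bar> powr p = (\<Sum>U\<in>Ux z. \<bar>b U x\<bar> powr p)"
      using F_nn[of x z] pn_pow[OF p0] unfolding F_def by simp
    also have "\<dots> = (\<Sum>U\<in>Ux z. a U x powr p / real (card U))"
    proof (rule sum.cong[OF refl])
      fix U assume U: "U \<in> Ux z"
      have c: "card U > 0" using finU U unfolding Ux_def by auto
      have "\<bar>b U x\<bar> = \<bar>a U x\<bar> / real (card U) powr (1/p)" unfolding b_def by simp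
      then show "\<bar>b U x\<bar> powr p = a U x powr p / real (card U)"
        using pow_div_card[OF c p0, of "a U x"] a_nn[of U x] by simp
    qed
    finally show ?thesis .
  qed
  define N where "N x = pn p (cball x S) (F x)" for x
  have N_eq: "N x = pn p (Ux x) (\<lambda>U. a U x)" for x
  proof (rule powr_inj_nonneg[OF _ _ p0])
    have "N x powr p = (\<Sum>z\<in>cball x S. \<Sum>U\<in>Ux z. a U x powr p / real (card U))"
      unfolding N_def pn_pow[OF p0] Fpow ..
    also have "\<dots> = (\<Sum>U\<in>Ux x. a U x powr p)"
      unfolding Ux_def
      by (rule exch) (use fin Uxfin sub a_zero in \<open>auto simp: Ux_def\<close>)
    also have "\<dots> = pn p (Ux x) (\<lambda>U. a U x) powr p"
      unfolding pn_pow[OF p0] using a_nn by simp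
    finally show "N x powr p = pn p (Ux x) (\<lambda>U. a U x) powr p" .
  qed (auto simp: N_def pn_nonneg)
  have leb_le: "leb UU \<le> ereal (N x)" for x
  proof -
    have "leb UU \<le> leb_at UU x" unfolding leb_def by (rule INF_lower) simp
    also have "\<dots> \<le> ereal (N x)" unfolding leb_at_def
    proof (rule SUP_least)
      fix U assume U: "U \<in> UU"
      show "Sup {ereal r |r. ball x r \<subseteq> U} \<le> ereal (N x)"
      proof (rule Sup_least)
        fix e assume "e \<in> {ereal r |r. ball x r \<subseteq> U}"
        then obtain r where e: "e = ereal r" and r: "ball x r \<subseteq> U" by auto
        have "r \<le> N x"
        proof (cases "r > 0")
          case False
          then show ?thesis using N_eq pn_nonneg[of p "Ux x"] by (metis dual_order.trans not_le less_imp_le)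
        next
          case True
          then have xU: "x \<in> U" using r by auto
          have ne: "-U \<noteq> {}"
          proof
            assume "-U = {}"
            then have "UNIV \<subseteq> cball x S" using sub[OF U xU] by auto
            then show False using unb bounded_cball bounded_subset by blast
          qed
          have "r \<le> a U x" unfolding a_def infdist_notempty[OF ne]
          proof (rule cINF_greatest[OF ne])
            fix y assume "y \<in> -U"
            then show "r \<le> dist x y" using r by (metis ComplD mem_ball not_le subsetD)
          qed
          also have "a U x \<le> pn p (Ux x) (\<lambda>U. a U x)"
            using pn_single[OF Uxfin _ p0, of U x "\<lambda>U. a U x"] U xU a_nn[of U x] by (simp add: Ux_def)
          finally show ?thesis using N_eq by simp
        qed
        then show "e \<le> ereal (N x)" using e by simp
      qed
    qed
    finally show ?thesis .
  qed
  obtain Lr where Lr: "leb UU = ereal Lr"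
    using leb_le[of undefined] lp by (cases "leb UU") auto
  have Lr0: "Lr > 0" using lp Lr by simp
  have LrN: "Lr \<le> N x" for x using leb_le[of x] Lr by simp
  have Npos: "N x > 0" for x using LrN[of x] Lr0 by linarith
  define K where "K = 2 * (2*m) powr (1/p) / Lr"
  define xi where "xi x z = F x z / N x" for x z
  have xi_sphere: "xi x \<in> lp_sphere p" for x
  proof -
    have z: "xi x z = 0" if "z \<notin> cball x S" for z using F_supp that unfolding xi_def by fastforce
    have "lp_norm p (xi x) = pn p (cball x S) (\<lambda>z. (1 / N x) * F x z)"
      using lp_fin(2)[OF fin z p0] unfolding xi_def by simp
    also have "\<dots> = 1" unfolding pn_scale[OF p0] using Npos[of x] by (simp add: N_def)
    finally show ?thesis using lp_fin(1)[OF fin z p0] unfolding lp_sphere_def by simp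
  qed
  have xi_S: "prop_S xi \<le> ereal S"
    unfolding prop_S_def
  proof (rule Sup_least)
    fix e assume "e \<in> {ereal (dist x y) |x y. xi x y \<noteq> 0}"
    then obtain x y where "e = ereal (dist x y)" "xi x y \<noteq> 0" by auto
    then show "e \<le> ereal S" using F_supp[of x y] unfolding xi_def by auto
  qed
  have xi_eps: "eps_xi p xi \<le> ereal K"
    unfolding eps_xi_def
  proof (rule SUP_least)
    fix q :: "'a \<times> 'a" assume "q \<in> {(x, y). x \<noteq> y}"
    then obtain x y where q: "q = (x,y)" and xy: "x \<noteq> y" by auto
    define Z where "Z = cball x S \<union> cball y S"
    have Zf: "finite Z" unfolding Z_def using fin by simp
    have Fx0: "F x z = 0" if "z \<notin> Z" for z using F_supp that unfolding Z_def by blast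
    have Fy0: "F y z = 0" if "z \<notin> Z" for z using F_supp that unfolding Z_def by blast
    have Nx: "N x = pn p Z (F x)"
      using lp_fin(2)[OF fin, of x "F x", OF _ p0] lp_fin(2)[OF Zf Fx0 p0] F_supp unfolding N_def by fastforce
    have Ny: "N y = pn p Z (F y)"
      using lp_fin(2)[OF fin, of y "F y", OF _ p0] lp_fin(2)[OF Zf Fy0 p0] F_supp unfolding N_def by fastforce
    define D where "D = pn p Z (\<lambda>z. F x z - F y z)"
    have D_bound: "D \<le> (2*m) powr (1/p) * dist x y"
    proof -
      define W where "W = Ux x \<union> Ux y"
      have "D powr p = (\<Sum>z\<in>Z. \<bar>F x z - F y z\<bar> powr p)" unfolding D_def pn_pow[OF p0] ..
      also have "\<dots> \<le> (\<Sum>z\<in>Z. \<Sum>U\<in>Ux z. \<bar>a U x - a U y\<bar> powr p / real (card U))"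
      proof (rule sum_mono)
        fix z assume "z \<in> Z"
        have "\<bar>F x z - F y z\<bar> \<le> pn p (Ux z) (\<lambda>U. b U x - b U y)"
          unfolding F_def by (rule pn_rev[OF Uxfin p1])
        then have "\<bar>F x z - F y z\<bar> powr p \<le> pn p (Ux z) (\<lambda>U. b U x - b U y) powr p"
          using p0 by (intro powr_mono2) auto
        also have "\<dots> = (\<Sum>U\<in>Ux z. \<bar>a U x - a U y\<bar> powr p / real (card U))"
          unfolding pn_pow[OF p0] by (intro sum.cong refl bpow)
        finally show "\<bar>F x z - F y z\<bar> powr p \<le> (\<Sum>U\<in>Ux z. \<bar>a U x - a U y\<bar> powr p / real (card U))" .
      qed
      also have "\<dots> = (\<Sum>U\<in>W. \<bar>a U x - a U y\<bar> powr p)"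
        unfolding Ux_def
        by (rule exch) (use Zf Uxfin sub a_zero in \<open>auto simp: Ux_def W_def Z_def\<close>)
      also have "\<dots> \<le> (\<Sum>U\<in>W. dist x y powr p)"
        using a_lip p0 by (intro sum_mono powr_mono2) auto
      also have "\<dots> = real (card W) * dist x y powr p" by simp
      also have "\<dots> \<le> (2*m) * dist x y powr p"
      proof (rule mult_right_mono)
        have "card W \<le> card (Ux x) + card (Ux y)" unfolding W_def by (rule card_Un_le)
        then show "real (card W) \<le> 2*m" using cardm[of x] cardm[of y] by linarith
      qed simp
      finally have Dp: "D powr p \<le> (2*m) * dist x y powr p" .
      have "D = (D powr p) powr (1/p)" using p0 pn_nonneg[of p Z] unfolding D_def by (simp add: powr_powr)
      also have "\<dots> \<le> ((2*m) * dist x y powr p) powr (1/p)"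
        using Dp p0 by (intro powr_mono2) auto
      also have "\<dots> = (2*m) powr (1/p) * dist x y"
        using m1 p0 by (simp add: powr_mult powr_powr)
      finally show ?thesis .
    qed
    have e1: "lp_norm p (\<lambda>z. xi x z - xi y z) = pn p Z (\<lambda>z. xi x z - xi y z)"
      using Fx0 Fy0 by (intro lp_fin(2)[OF Zf _ p0]) (simp add: xi_def)
    have e2: "pn p Z (\<lambda>z. xi x z - xi y z) \<le> pn p Z (\<lambda>z. F x z / N x - F y z / N x) + pn p Z (\<lambda>z. F y z / N x - F y z / N y)"
      unfolding xi_def by (rule pn_diff_tri[OF Zf p1])
    have e3: "pn p Z (\<lambda>z. F x z / N x - F y z / N x) = D / N x"
      using pn_scale[OF p0, of Z "1 / N x" "\<lambda>z. F x z - F y z"] Npos[of x]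
      unfolding D_def by (simp add: diff_divide_distrib)
    have e4: "pn p Z (\<lambda>z. F y z / N x - F y z / N y) = \<bar>1 / N x - 1 / N y\<bar> * N y"
      using pn_scale[OF p0, of Z "1 / N x - 1 / N y" "F y"] Ny
      by (simp add: algebra_simps)
    have e5: "\<bar>1 / N x - 1 / N y\<bar> * N y = \<bar>N x - N y\<bar> / N x"
    proof -
      have a: "N x > 0" and b: "N y > 0" using Npos by auto
      have "1/N x - 1/N y = (N y - N x)/(N x * N y)" using a b by (simp add: field_simps)
      then have "\<bar>1/N x - 1/N y\<bar> = \<bar>N y - N x\<bar>/(N x * N y)" using a b by simp
      then show ?thesis using a b by (simp add: abs_minus_commute)
    qed
    have e6: "\<bar>N x - N y\<bar> \<le> D" unfolding Nx Ny D_def by (rule pn_rev[OF Zf p1])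
    have e7: "\<bar>N x - N y\<bar> / N x \<le> D / N x" using e6 Npos[of x] by (intro divide_right_mono) auto
    have "lp_norm p (\<lambda>z. xi x z - xi y z) \<le> D / N x + D / N x"
      using e1 e2 e3 e4 e5 e7 by linarith
    also have "\<dots> = 2 * D / N x" by simp
    also have "\<dots> \<le> 2 * D / Lr"
      using LrN[of x] Lr0 D_def pn_nonneg by (intro divide_left_mono) (auto intro: mult_nonneg_nonneg)
    also have "\<dots> \<le> 2 * ((2*m) powr (1/p) * dist x y) / Lr"
      using D_bound Lr0 by (intro divide_right_mono) auto
    finally have h: "lp_norm p (\<lambda>z. xi x z - xi y z) \<le> 2 * ((2*m) powr (1/p) * dist x y) / Lr" .
    have d: "dist x y > 0" using xy by simp
    have "lp_norm p (\<lambda>z. xi x z - xi y z) / dist x y \<le> (2 * ((2*m) powr (1/p) * dist x y) / Lr) / dist x y"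
      using h d by (intro divide_right_mono) auto
    also have "\<dots> = K" using d unfolding K_def by simp
    finally have "lp_norm p (\<lambda>z. xi x z - xi y z) / dist x y \<le> K" .
    then show "(case q of (x, y) \<Rightarrow> ereal (lp_norm p (\<lambda>z. xi x z - xi y z) / dist x y)) \<le> ereal K"
      using q by simp
  qed
  have "eps_X TYPE('a) p S \<le> eps_xi p xi"
    unfolding eps_X_def using xi_sphere xi_S by (intro INF_lower) auto
  also have "\<dots> \<le> ereal K" by (rule xi_eps)
  finally show ?thesis using Lr Lr0 mult_eq m1 unfolding K_def by blast
qed

theorem corollary3p2p2:
  fixes p S :: real
  assumes "\<not> bounded (UNIV :: 'a::metric_space set)"
    and "bounded_geometry TYPE('a)"
    and "finite_asdim TYPE('a)"
    and "1 \<le> p"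
    and "S > 0"
    and "delta_p TYPE('a) p S > 0"
  shows "eps_X TYPE('a) p S \<le> ereal (2 powr (1 + 1 / p)) / delta_p TYPE('a) p S
       \<and> ereal (2 powr (1 + 1 / p)) / delta_p TYPE('a) p S \<le> 4 / delta_p TYPE('a) p S"
proof -
  have p1: "1 \<le> p" and p0: "p > 0" using assms(4) by auto
  have fin: "finite (cball x S)" for x :: 'a
    using assms(2) unfolding bounded_geometry_def by metis
  define c where "c = 2 powr (1 + 1 / p)"
  have c0: "c > 0" unfolding c_def by simp
  have c4: "c \<le> 4"
  proof -
    have "c \<le> 2 powr 2" unfolding c_def using p1 by (intro powr_mono) (auto simp: field_simps)
    then show ?thesis by simp
  qed
  define D where "D = delta_p TYPE('a) p S"
  define e where "e = eps_X TYPE('a) p S"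
  have key: "\<exists>\<rho>>0. cover_ratio p UU = ereal \<rho> \<and> e \<le> ereal (c / \<rho>)"
    if UU: "is_cover UU" "mesh UU \<le> ereal S" and r: "cover_ratio p UU > 0" for UU :: "'a set set"
  proof -
    have mf: "mult UU \<noteq> \<infinity>" using r unfolding cover_ratio_def by auto
    define q where "q = real_of_ereal (mult UU) powr (2 / p)"
    have q0: "q \<ge> 0" unfolding q_def by simp
    have cr: "cover_ratio p UU = leb UU / ereal q" using mf unfolding cover_ratio_def q_def by simp
    have lp: "leb UU > 0"
    proof (rule ccontr)
      assume "\<not> leb UU > 0"
      then have "leb UU \<le> 0" by simp
      then have "leb UU / ereal q \<le> 0" using q0 by (cases "leb UU") (auto simp: ereal_mult_le_0_iff divide_nonpos_nonneg)
      then show False using r cr by simp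
    qed
    obtain Lr m where Lr: "leb UU = ereal Lr" "Lr > 0" and m: "mult UU = ereal m" "m \<ge> 1"
      and eb: "e \<le> ereal (2 * (2*m) powr (1/p) / Lr)"
      using main[OF assms(1) fin UU mf p1 lp] unfolding e_def by blast
    have qm: "q = m powr (2/p)" unfolding q_def m by simp
    have qp: "q > 0" unfolding qm using m by simp
    define \<rho> where "\<rho> = Lr / q"
    have rho0: "\<rho> > 0" unfolding \<rho>_def using Lr qp by simp
    have cr2: "cover_ratio p UU = ereal \<rho>" unfolding cr Lr \<rho>_def using qp by simp
    have "2 * (2*m) powr (1/p) = c * m powr (1/p)"
      unfolding c_def using m by (simp add: powr_mult powr_add)
    also have "\<dots> \<le> c * q"
      unfolding qm using m c0 p0 by (intro mult_left_mono powr_mono) (auto simp: divide_right_mono)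
    finally have "2 * (2*m) powr (1/p) / Lr \<le> c * q / Lr" using Lr by (intro divide_right_mono) auto
    also have "c * q / Lr = c / \<rho>" unfolding \<rho>_def using qp Lr by simp
    finally have "e \<le> ereal (c / \<rho>)" using eb by (meson ereal_less_eq(3) order_trans)
    then show ?thesis using rho0 cr2 by blast
  qed
  obtain U0 :: "'a set set" where U0: "is_cover U0" "mesh U0 \<le> ereal S" "cover_ratio p U0 > 0"
    using assms(6) unfolding delta_p_def less_SUP_iff by auto
  from key[OF U0] obtain \<rho>0 where "e \<le> ereal (c / \<rho>0)" by blast
  then have efin: "e \<noteq> \<infinity>" by auto
  have part1: "e \<le> ereal c / D"
  proof (cases "e \<le> 0")
    case True
    have "0 \<le> ereal c / D" using c0 assms(6) unfolding D_def
      by (cases "delta_p TYPE('a) p S") auto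
    then show ?thesis using True by simp
  next
    case False
    then obtain \<epsilon> where eps: "e = ereal \<epsilon>" "\<epsilon> > 0" using efin by (cases e) auto
    have "D \<le> ereal (c / \<epsilon>)" unfolding D_def delta_p_def
    proof (rule SUP_least)
      fix UU :: "'a set set" assume "UU \<in> {UU. is_cover UU \<and> mesh UU \<le> ereal S}"
      then have UU: "is_cover UU" "mesh UU \<le> ereal S" by auto
      show "cover_ratio p UU \<le> ereal (c / \<epsilon>)"
      proof (cases "cover_ratio p UU > 0")
        case False
        then have "cover_ratio p UU \<le> 0" by simp
        also have "0 \<le> ereal (c / \<epsilon>)" using c0 eps by simp
        finally show ?thesis .
      next
        case True
        from key[OF UU True] obtain \<rho> where rr: "\<rho> > 0" "cover_ratio p UU = ereal \<rho>" "e \<le> ereal (c / \<rho>)" by blast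
        then have "\<epsilon> \<le> c / \<rho>" using eps by simp
        then have "\<rho> \<le> c / \<epsilon>" using rr eps c0 by (simp add: field_simps)
        then show ?thesis using rr by simp
      qed
    qed
    moreover have "D > 0" unfolding D_def using assms(6) .
    ultimately obtain \<delta> where dd: "D = ereal \<delta>" "\<delta> > 0" "\<delta> \<le> c / \<epsilon>" by (cases D) auto
    then have "\<epsilon> \<le> c / \<delta>" using eps c0 by (simp add: field_simps)
    then show ?thesis using eps dd by simp
  qed
  have part2: "ereal c / D \<le> 4 / D"
  proof -
    have "D > 0" unfolding D_def using assms(6) .
    then show ?thesis using c4 c0
      by (cases D) (auto intro: divide_right_mono)
  qed
  show ?thesis using part1 part2 unfolding c_def D_def e_def by simp
qed

end
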